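(* Let $G=\bigl((f_j)_{j=1}^n;(\mu^{R})_{\emptyset\ne R\subseteq[n]}\bigr)$ be an $n$-resource selection game. (a) For every nonempty $R\subseteq[n]$, every two Nash equilibria $s,s'$ of $G$, every $k$ with $s_k(R)>0$ and every $k'$ with $s'_{k'}(R)>0$, we have $h^s_k=h^{s'}_{k'}$. (b) If there is no real number $h$ that is a plateau height of two distinct functions $f_j,f_{j'}$ ($j\ne j'$), then $\mu^s_j=\mu^{s'}_j$ for every $j\in[n]$ and every two Nash equilibria $s,s'$ of $G$.
   Context: Write $[n]=\{1,\ldots,n\}$ and $\mathbb{R}_{\ge}=[0,\infty)$. An $n$-resource selection game is a pair $G=\bigl((f_j)_{j=1}^n;(\mu^{R})_{\emptyset\ne R\subseteq[n]}\bigr)$ where each $f_j:\mathbb{R}_{\ge}\to\mathbb{R}$ is nondecreasing and $\mu^R\in\mathbb{R}_{\ge}$ for every nonempty $R\subseteq[n]$. A consumption profile is a map $s$ assigning to each nonempty $R\subseteq[n]$ a vector $s(R)\in\mathbb{R}_{\ge}^{[n]}$ with $s_j(R)=0$ for $j\notin R$ and $\sum_{j}s_j(R)=\mu^R$. The load of resource $j$ is $\mu^s_j=\sum_{R}s_j(R)$ and its cost is $h^s_j=f_j(\mu^s_j)$. $s$ is a Nash equilibrium if for every nonempty $R$, every $k$ with $s_k(R)>0$ and every $j\in R$, $h^s_k\le h^s_j$. A real number $h$ is a plateau height of a nondecreasing $f$ if there exist $x\ne y$ with $f(x)=f(y)=h$. *)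

theory Defs
  imports Complex_Main
begin

text \<open>Resources are indexed by {1..n}; f j is the cost function of resource j (only its
restriction to [0,\<infinity>) matters), mu R is the demand of the player class R.
A consumption profile is a function s :: nat set \<Rightarrow> nat \<Rightarrow> real; only its values on
nonempty R \<subseteq> {1..n} and j \<in> {1..n} are relevant.\<close>

definition coalitions :: "nat \<Rightarrow> nat set set" where
  "coalitions n = {R. R \<subseteq> {1..n} \<and> R \<noteq> {}}"

definition is_game :: "nat \<Rightarrow> (nat \<Rightarrow> real \<Rightarrow> real) \<Rightarrow> (nat set \<Rightarrow> real) \<Rightarrow> bool" where
  "is_game n f mu \<longleftrightarrow>
     (\<forall>j\<in>{1..n}. mono_on {0..} (f j)) \<and> (\<forall>R\<in>coalitions n. mu R \<ge> 0)"

definition consumption_profile ::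
  "nat \<Rightarrow> (nat set \<Rightarrow> real) \<Rightarrow> (nat set \<Rightarrow> nat \<Rightarrow> real) \<Rightarrow> bool" where
  "consumption_profile n mu s \<longleftrightarrow>
     (\<forall>R\<in>coalitions n.
        (\<forall>j\<in>{1..n}. s R j \<ge> 0) \<and>
        (\<forall>j\<in>{1..n}. j \<notin> R \<longrightarrow> s R j = 0) \<and>
        (\<Sum>j\<in>{1..n}. s R j) = mu R)"

definition load :: "nat \<Rightarrow> (nat set \<Rightarrow> nat \<Rightarrow> real) \<Rightarrow> nat \<Rightarrow> real" where
  "load n s j = (\<Sum>R\<in>coalitions n. s R j)"

definition cost :: "nat \<Rightarrow> (nat \<Rightarrow> real \<Rightarrow> real) \<Rightarrow> (nat set \<Rightarrow> nat \<Rightarrow> real) \<Rightarrow> nat \<Rightarrow> real" where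
  "cost n f s j = f j (load n s j)"

definition nash_equilibrium ::
  "nat \<Rightarrow> (nat \<Rightarrow> real \<Rightarrow> real) \<Rightarrow> (nat set \<Rightarrow> real) \<Rightarrow> (nat set \<Rightarrow> nat \<Rightarrow> real) \<Rightarrow> bool" where
  "nash_equilibrium n f mu s \<longleftrightarrow> consumption_profile n mu s \<and>
     (\<forall>R\<in>coalitions n. \<forall>k\<in>{1..n}. s R k > 0 \<longrightarrow>
        (\<forall>j\<in>R. cost n f s k \<le> cost n f s j))"

definition plateau_height :: "(real \<Rightarrow> real) \<Rightarrow> real \<Rightarrow> bool" where
  "plateau_height g h \<longleftrightarrow> (\<exists>x y. x \<ge> 0 \<and> y \<ge> 0 \<and> x \<noteq> y \<and> g x = h \<and> g y = h)"

end

theory Submission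
  imports Defs
begin

lemma coal_fin: "finite (coalitions n)"
  by (rule finite_subset[of _ "Pow {1..n}"]) (auto simp: coalitions_def)

lemma coal_R: "R \<in> coalitions n \<Longrightarrow> finite R \<and> R \<noteq> {} \<and> R \<subseteq> {1..n}"
  by (auto simp: coalitions_def intro: finite_subset)

lemma cp_nonneg: "consumption_profile n mu s \<Longrightarrow> R \<in> coalitions n \<Longrightarrow> j \<in> {1..n} \<Longrightarrow> s R j \<ge> 0"
  by (auto simp: consumption_profile_def)

lemma cp_out: "consumption_profile n mu s \<Longrightarrow> R \<in> coalitions n \<Longrightarrow> j \<in> {1..n} \<Longrightarrow> j \<notin> R \<Longrightarrow> s R j = 0"
  by (auto simp: consumption_profile_def)

lemma cp_sum: "consumption_profile n mu s \<Longrightarrow> R \<in> coalitions n \<Longrightarrow> (\<Sum>j\<in>{1..n}. s R j) = mu R"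
  by (auto simp: consumption_profile_def)

lemma load_nonneg: "consumption_profile n mu s \<Longrightarrow> j \<in> {1..n} \<Longrightarrow> load n s j \<ge> 0"
  unfolding load_def by (rule sum_nonneg) (auto intro: cp_nonneg)

lemma ne_min:
  assumes ne: "nash_equilibrium n f mu s" and R: "R \<in> coalitions n" and k: "k \<in> {1..n}"
    and pos: "s R k > 0"
  shows "k \<in> R" "cost n f s k = Min (cost n f s ` R)"
proof -
  have cp: "consumption_profile n mu s" using ne by (simp add: nash_equilibrium_def)
  show kR: "k \<in> R" using cp_out[OF cp R k] pos by force
  have le: "\<forall>j\<in>R. cost n f s k \<le> cost n f s j" using ne R k pos by (auto simp: nash_equilibrium_def)
  show "cost n f s k = Min (cost n f s ` R)"
    using coal_R[OF R] kR le by (intro Min_eqI[symmetric]) auto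
qed

lemma ineq:
  assumes ne: "nash_equilibrium n f mu s" and cp': "consumption_profile n mu s'"
    and R: "R \<in> coalitions n"
  shows "(\<Sum>j\<in>{1..n}. cost n f s j * s R j) \<le> (\<Sum>j\<in>{1..n}. cost n f s j * s' R j)"
proof -
  have cp: "consumption_profile n mu s" using ne by (simp add: nash_equilibrium_def)
  define c where "c = Min (cost n f s ` R)"
  have "(\<Sum>j\<in>{1..n}. cost n f s j * s R j) = (\<Sum>j\<in>{1..n}. c * s R j)"
  proof (rule sum.cong)
    fix j assume j: "j \<in> {1..n}"
    show "cost n f s j * s R j = c * s R j"
    proof (cases "s R j = 0")
      case False
      then have "s R j > 0" using cp_nonneg[OF cp R j] by auto
      then show ?thesis using ne_min[OF ne R j] c_def by simp
    qed simp
  qed simp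
  also have "\<dots> = c * mu R" using cp_sum[OF cp R] by (simp add: sum_distrib_left[symmetric])
  also have "\<dots> = (\<Sum>j\<in>{1..n}. c * s' R j)" using cp_sum[OF cp' R] by (simp add: sum_distrib_left[symmetric])
  also have "\<dots> \<le> (\<Sum>j\<in>{1..n}. cost n f s j * s' R j)"
  proof (rule sum_mono)
    fix j assume j: "j \<in> {1..n}"
    show "c * s' R j \<le> cost n f s j * s' R j"
    proof (cases "j \<in> R")
      case True
      have "c \<le> cost n f s j" unfolding c_def using coal_R[OF R] True by (intro Min_le) auto
      then show ?thesis using cp_nonneg[OF cp' R j] by (rule mult_right_mono)
    next
      case False
      then show ?thesis using cp_out[OF cp' R j] by simp
    qed
  qed
  finally show ?thesis .
qed

lemma total:
  "(\<Sum>R\<in>coalitions n. \<Sum>j\<in>{1..n}. (h::nat\<Rightarrow>real) j * s R j) = (\<Sum>j\<in>{1..n}. h j * load n s j)"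
  unfolding load_def sum_distrib_left by (rule sum.swap)

lemma costs_eq:
  assumes g: "is_game n f mu" and ne: "nash_equilibrium n f mu s" and ne': "nash_equilibrium n f mu s'"
  shows "\<forall>j\<in>{1..n}. cost n f s j = cost n f s' j"
proof -
  have cp: "consumption_profile n mu s" using ne by (simp add: nash_equilibrium_def)
  have cp': "consumption_profile n mu s'" using ne' by (simp add: nash_equilibrium_def)
  let ?h = "cost n f s" and ?h' = "cost n f s'" and ?m = "load n s" and ?m' = "load n s'"
  have A: "(\<Sum>j\<in>{1..n}. ?h j * ?m j) \<le> (\<Sum>j\<in>{1..n}. ?h j * ?m' j)"
    unfolding total[symmetric] by (rule sum_mono) (rule ineq[OF ne cp'])
  have B: "(\<Sum>j\<in>{1..n}. ?h' j * ?m' j) \<le> (\<Sum>j\<in>{1..n}. ?h' j * ?m j)"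
    unfolding total[symmetric] by (rule sum_mono) (rule ineq[OF ne' cp])
  have eq: "(\<Sum>j\<in>{1..n}. (?h j - ?h' j) * (?m j - ?m' j)) =
     (\<Sum>j\<in>{1..n}. ?h j * ?m j) - (\<Sum>j\<in>{1..n}. ?h j * ?m' j)
     + ((\<Sum>j\<in>{1..n}. ?h' j * ?m' j) - (\<Sum>j\<in>{1..n}. ?h' j * ?m j))"
  proof -
    have "(\<Sum>j\<in>{1..n}. (?h j - ?h' j) * (?m j - ?m' j)) =
       (\<Sum>j\<in>{1..n}. (?h j * ?m j - ?h j * ?m' j) + (?h' j * ?m' j - ?h' j * ?m j))"
      by (rule sum.cong) (simp_all add: algebra_simps)
    also have "\<dots> = (\<Sum>j\<in>{1..n}. ?h j * ?m j - ?h j * ?m' j) + (\<Sum>j\<in>{1..n}. ?h' j * ?m' j - ?h' j * ?m j)"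
      by (rule sum.distrib)
    finally show ?thesis by (simp only: sum_subtractf)
  qed
  have nn: "\<forall>j\<in>{1..n}. (?h j - ?h' j) * (?m j - ?m' j) \<ge> 0"
  proof
    fix j assume j: "j \<in> {1..n}"
    have mono: "mono_on {0..} (f j)" using g j by (simp add: is_game_def)
    have m0: "?m j \<ge> 0" "?m' j \<ge> 0" using load_nonneg[OF cp j] load_nonneg[OF cp' j] by auto
    show "(?h j - ?h' j) * (?m j - ?m' j) \<ge> 0"
    proof (cases "?m j \<le> ?m' j")
      case True
      then have "?h j \<le> ?h' j" using mono m0 unfolding cost_def by (auto intro: mono_onD)
      then show ?thesis using True by (simp add: mult_nonpos_nonpos)
    next
      case False
      then have "?h' j \<le> ?h j" using mono m0 unfolding cost_def by (auto intro: mono_onD)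
      then show ?thesis using False by simp
    qed
  qed
  have "(\<Sum>j\<in>{1..n}. (?h j - ?h' j) * (?m j - ?m' j)) \<le> 0" using eq A B by linarith
  moreover have "(\<Sum>j\<in>{1..n}. (?h j - ?h' j) * (?m j - ?m' j)) \<ge> 0"
    by (rule sum_nonneg) (use nn in blast)
  ultimately have s0: "(\<Sum>j\<in>{1..n}. (?h j - ?h' j) * (?m j - ?m' j)) = 0" by linarith
  have z: "\<forall>j\<in>{1..n}. (?h j - ?h' j) * (?m j - ?m' j) = 0"
  proof -
    have "((\<Sum>j\<in>{1..n}. (?h j - ?h' j) * (?m j - ?m' j)) = 0) = (\<forall>j\<in>{1..n}. (?h j - ?h' j) * (?m j - ?m' j) = 0)"
      by (rule sum_nonneg_eq_0_iff) (use nn in auto)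
    then show ?thesis using s0 by blast
  qed
  show ?thesis
  proof
    fix j assume "j \<in> {1..n}"
    then have "?h j = ?h' j \<or> ?m j = ?m' j" using z by auto
    then show "?h j = ?h' j" by (auto simp: cost_def)
  qed
qed

lemma level_sum:
  assumes ne: "nash_equilibrium n f mu s" and R: "R \<in> coalitions n"
  shows "(\<Sum>i\<in>{i\<in>{1..n}. cost n f s i = H}. s R i) =
         (if Min (cost n f s ` R) = H then mu R else 0)"
proof -
  have cp: "consumption_profile n mu s" using ne by (simp add: nash_equilibrium_def)
  have key: "\<And>i. i \<in> {1..n} \<Longrightarrow> s R i \<noteq> 0 \<Longrightarrow> cost n f s i = Min (cost n f s ` R)"
  proof -
    fix i assume i: "i \<in> {1..n}" and "s R i \<noteq> 0"
    then have "s R i > 0" using cp_nonneg[OF cp R i] by auto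
    then show "cost n f s i = Min (cost n f s ` R)" using ne_min[OF ne R i] by simp
  qed
  have "(\<Sum>i\<in>{i\<in>{1..n}. cost n f s i = H}. s R i) = (\<Sum>i\<in>{1..n}. if cost n f s i = H then s R i else 0)"
    by (rule sum.inter_filter) simp
  also have "\<dots> = (\<Sum>i\<in>{1..n}. if Min (cost n f s ` R) = H then s R i else 0)"
    apply (rule sum.cong, simp)
    subgoal for i using key[of i] by (cases "s R i = 0") auto
    done
  also have "\<dots> = (if Min (cost n f s ` R) = H then mu R else 0)"
    using cp_sum[OF cp R] by simp
  finally show ?thesis .
qed

lemma level_load:
  assumes ne: "nash_equilibrium n f mu s"
  shows "(\<Sum>i\<in>{i\<in>{1..n}. cost n f s i = H}. load n s i) =
         (\<Sum>R\<in>coalitions n. if Min (cost n f s ` R) = H then mu R else 0)"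
  unfolding load_def by (subst sum.swap) (rule sum.cong, simp, rule level_sum[OF ne])

theorem mainTheorem3:
  fixes n :: nat and f :: "nat \<Rightarrow> real \<Rightarrow> real" and mu :: "nat set \<Rightarrow> real"
  assumes "is_game n f mu"
  shows "(\<forall>R\<in>coalitions n. \<forall>s s' k k'.
            nash_equilibrium n f mu s \<and> nash_equilibrium n f mu s' \<and>
            k \<in> {1..n} \<and> k' \<in> {1..n} \<and> s R k > 0 \<and> s' R k' > 0 \<longrightarrow>
            cost n f s k = cost n f s' k')
       \<and> ((\<not> (\<exists>h. \<exists>j\<in>{1..n}. \<exists>j'\<in>{1..n}. j \<noteq> j' \<and>
                 plateau_height (f j) h \<and> plateau_height (f j') h)) \<longrightarrow>
          (\<forall>s s'. nash_equilibrium n f mu s \<and> nash_equilibrium n f mu s' \<longrightarrow>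
             (\<forall>j\<in>{1..n}. load n s j = load n s' j)))"
proof (intro conjI ballI allI impI)
  fix R s s' k k'
  assume R: "R \<in> coalitions n" and H: "nash_equilibrium n f mu s \<and> nash_equilibrium n f mu s' \<and>
            k \<in> {1..n} \<and> k' \<in> {1..n} \<and> s R k > 0 \<and> s' R k' > 0"
  then have ne: "nash_equilibrium n f mu s" and ne': "nash_equilibrium n f mu s'"
    and k: "k \<in> {1..n}" and k': "k' \<in> {1..n}" and p: "s R k > 0" and p': "s' R k' > 0" by auto
  have ceq: "\<forall>j\<in>{1..n}. cost n f s j = cost n f s' j" by (rule costs_eq[OF assms ne ne'])
  have "cost n f s k = Min (cost n f s ` R)" by (rule ne_min[OF ne R k p])
  moreover have "cost n f s' k' = Min (cost n f s' ` R)" by (rule ne_min[OF ne' R k' p'])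
  moreover have "cost n f s ` R = cost n f s' ` R" using ceq coal_R[OF R] by (intro image_cong) auto
  ultimately show "cost n f s k = cost n f s' k'" by simp
next
  fix s s' j
  assume np: "\<not> (\<exists>h. \<exists>j\<in>{1..n}. \<exists>j'\<in>{1..n}. j \<noteq> j' \<and>
                 plateau_height (f j) h \<and> plateau_height (f j') h)"
    and H: "nash_equilibrium n f mu s \<and> nash_equilibrium n f mu s'" and j: "j \<in> {1..n}"
  then have ne: "nash_equilibrium n f mu s" and ne': "nash_equilibrium n f mu s'" by auto
  have cp: "consumption_profile n mu s" using ne by (simp add: nash_equilibrium_def)
  have cp': "consumption_profile n mu s'" using ne' by (simp add: nash_equilibrium_def)
  have ceq: "\<forall>j\<in>{1..n}. cost n f s j = cost n f s' j" by (rule costs_eq[OF assms ne ne'])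
  have imgeq: "\<And>R. R \<in> coalitions n \<Longrightarrow> cost n f s ` R = cost n f s' ` R"
    using ceq coal_R by (intro image_cong) auto
  define H where "H = cost n f s j"
  define L where "L = {i\<in>{1..n}. cost n f s i = H}"
  have L': "L = {i\<in>{1..n}. cost n f s' i = H}" unfolding L_def using ceq by auto
  have sumeq: "(\<Sum>i\<in>L. load n s i) = (\<Sum>i\<in>L. load n s' i)"
    unfolding L_def apply (subst level_load[OF ne]) apply (subst L_def[symmetric])
    apply (subst L') apply (subst level_load[OF ne'])
    by (rule sum.cong) (auto simp: imgeq)
  have plat: "\<And>i. i \<in> L \<Longrightarrow> load n s i \<noteq> load n s' i \<Longrightarrow> plateau_height (f i) H"
  proof -
    fix i assume i: "i \<in> L" and d: "load n s i \<noteq> load n s' i"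
    have iI: "i \<in> {1..n}" using i L_def by auto
    show "plateau_height (f i) H" unfolding plateau_height_def
      using i d ceq iI load_nonneg[OF cp iI] load_nonneg[OF cp' iI]
      by (intro exI[of _ "load n s i"] exI[of _ "load n s' i"]) (auto simp: L_def cost_def)
  qed
  have jL: "j \<in> L" using j by (simp add: L_def H_def)
  show "load n s j = load n s' j"
  proof (rule ccontr)
    assume d: "load n s j \<noteq> load n s' j"
    have "\<exists>j'\<in>L. j' \<noteq> j \<and> load n s j' \<noteq> load n s' j'"
    proof (rule ccontr)
      assume "\<not> ?thesis"
      then have "\<forall>i\<in>L - {j}. load n s i = load n s' i" by auto
      then have "(\<Sum>i\<in>L - {j}. load n s i) = (\<Sum>i\<in>L - {j}. load n s' i)" by (intro sum.cong) auto
      moreover have "finite L" by (simp add: L_def)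
      ultimately show False using sumeq d jL by (simp add: sum.remove)
    qed
    then obtain j' where j': "j' \<in> L" "j' \<noteq> j" "load n s j' \<noteq> load n s' j'" by blast
    have "j' \<in> {1..n}" using j' L_def by auto
    then show False using np plat[OF jL d] plat[OF j'(1) j'(3)] j j'(2) by blast
  qed
qed

end
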